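(* Every non-zero element of $\mathbb{C}^{\mathbb{Z}}_{\mathrm{fin}}$ is generic.
   Context: $\mathbb{Z}$ acts on $\mathbb{C}^{\mathbb{Z}}$ by $n\cdot(a_i)_{i\in\mathbb{Z}}=(a_{i+n})_{i\in\mathbb{Z}}$; the elements $n\cdot\mathbf{a}$ are the $\mathbb{Z}$-translates of $\mathbf{a}$. $\mathbb{C}^{\mathbb{Z}}_{\mathrm{fin}}$ is the subspace of $\mathbb{C}^{\mathbb{Z}}$ of sequences with only finitely many non-zero entries. An element $\mathbf{a}\in\mathbb{C}^{\mathbb{Z}}$ is generic if the multiset of all its $\mathbb{Z}$-translates is linearly independent. *)

theory Defs
  imports Complex_Main
begin

definition shift :: "int \<Rightarrow> (int \<Rightarrow> complex) \<Rightarrow> (int \<Rightarrow> complex)" where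
  "shift n a = (\<lambda>i. a (i + n))"

definition fin_supp :: "(int \<Rightarrow> complex) \<Rightarrow> bool" where
  "fin_supp a \<longleftrightarrow> finite {i. a i \<noteq> 0}"

text \<open>Generic: the family (n . a) indexed by n in Z (a multiset, repetitions counted)
  is linearly independent over C: every finite linear combination that vanishes
  has all coefficients zero.\<close>
definition generic :: "(int \<Rightarrow> complex) \<Rightarrow> bool" where
  "generic a \<longleftrightarrow>
     (\<forall>S c. finite S \<longrightarrow> (\<forall>i. (\<Sum>n\<in>S. c n * shift n a i) = 0) \<longrightarrow> (\<forall>n\<in>S. c n = 0))"

end

theory Submission
  imports Defs
begin

theorem lemma2p2:
  fixes a :: "int \<Rightarrow> complex"
  assumes "fin_supp a" and "a \<noteq> (\<lambda>i. 0)"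
  shows "generic a"
  unfolding generic_def
proof (intro allI impI ballI)
  fix S c n
  assume fS: "finite S" and h: "\<forall>i. (\<Sum>n\<in>S. c n * shift n a i) = 0" and nS: "n \<in> S"
  show "c n = 0"
  proof (rule ccontr)
    assume cn: "c n \<noteq> 0"
    define A where "A = {i. a i \<noteq> 0}"
    have fA: "finite A" using assms(1) unfolding fin_supp_def A_def .
    have neA: "A \<noteq> {}" using assms(2) unfolding A_def by auto
    define m where "m = Max A"
    have am: "a m \<noteq> 0" using Max_in[OF fA neA] unfolding m_def A_def by auto
    have big: "a j = 0" if "j > m" for j
      using Max_ge[OF fA, of j] that unfolding m_def A_def by fastforce
    define T where "T = {k\<in>S. c k \<noteq> 0}"
    have fT: "finite T" using fS unfolding T_def by auto
    have neT: "T \<noteq> {}" using nS cn unfolding T_def by auto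
    define n0 where "n0 = Min T"
    have n0T: "n0 \<in> T" using Min_in[OF fT neT] unfolding n0_def .
    have n0le: "k \<in> T \<Longrightarrow> n0 \<le> k" for k using Min_le[OF fT] unfolding n0_def by auto
    have zero: "c k * shift k a (m - n0) = 0" if "k \<in> S - {n0}" for k
    proof (cases "c k = 0")
      case False
      then have "k \<in> T" using that unfolding T_def by auto
      then have "k > n0" using n0le that by force
      then show ?thesis using big[of "m - n0 + k"] unfolding shift_def by simp
    qed simp
    have n0S: "n0 \<in> S" using n0T unfolding T_def by auto
    have "(\<Sum>k\<in>S. c k * shift k a (m - n0)) = c n0 * shift n0 a (m - n0) + (\<Sum>k\<in>S - {n0}. c k * shift k a (m - n0))"
      using sum.remove[OF fS n0S] by blast
    also have "\<dots> = c n0 * a m"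
    proof -
      have "(\<Sum>k\<in>S - {n0}. c k * shift k a (m - n0)) = 0" by (rule sum.neutral) (use zero in blast)
      then show ?thesis unfolding shift_def by simp
    qed
    finally have "c n0 * a m = 0" using h by simp
    then show False using am n0T unfolding T_def by simp
  qed
qed

end
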